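(* Let $k=k(n)$, $m=m(n)$ be positive integers and suppose there is $\xi=\xi(n)\in(0,1/2)$ with $$\exp[-\xi^2 n]=o\big((1-2^{-k})^m\big)\qquad\text{and}\qquad \Big(\frac{1+2\xi}{4}\Big)^k=o(1/m).$$ Let $f=\bigwedge_{i=1}^m C_i$ where $C_1,\dots,C_m$ are independent uniformly random $k$-clauses on $x_1,\dots,x_n$. Then for every fixed $\zeta>0$, $$\Pr\Big(\big|\mu(f)-(1-2^{-k})^m\big|>\zeta(1-2^{-k})^m\Big)\to 0\quad(n\to\infty).$$
   Context: $\mu$ is the uniform probability measure on $\{0,1\}^n$ and $\mu(f)=\mu(\{x: f(x)=1\})$. A uniformly random $k$-clause on $x_1,\dots,x_n$ is obtained by choosing a $k$-subset $K\subseteq[n]$ uniformly at random and a vector $g\in\{0,1\}^K$ uniformly at random; the clause is the Boolean function $C(x)=1$ iff $x_j=g_j$ for some $j\in K$. *)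

theory Defs
  imports "HOL-Probability.Probability" "HOL-Library.Landau_Symbols"
begin

text \<open>Assignments x in {0,1}^n, with variables indexed 0..n-1 and 1 encoded as True.\<close>
definition cube :: "nat \<Rightarrow> (nat \<Rightarrow> bool) set" where
  "cube n = {..<n} \<rightarrow>\<^sub>E (UNIV :: bool set)"

text \<open>A clause is a pair (K, g) with K a k-subset of the variables and g in {0,1}^K;
  C(x) = 1 iff x_j = g_j for some j in K.\<close>
type_synonym clause = "nat set \<times> (nat \<Rightarrow> bool)"

definition clause_val :: "clause \<Rightarrow> (nat \<Rightarrow> bool) \<Rightarrow> bool" where
  "clause_val C x = (\<exists>j\<in>fst C. x j = snd C j)"

definition random_clause :: "nat \<Rightarrow> nat \<Rightarrow> clause pmf" where
  "random_clause n k =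
     bind_pmf (pmf_of_set {K. K \<subseteq> {..<n} \<and> card K = k})
       (\<lambda>K. map_pmf (\<lambda>g. (K, g)) (pmf_of_set (K \<rightarrow>\<^sub>E (UNIV :: bool set))))"

definition random_formula :: "nat \<Rightarrow> nat \<Rightarrow> nat \<Rightarrow> (nat \<Rightarrow> clause) pmf" where
  "random_formula n k m = Pi_pmf {..<m} undefined (\<lambda>_. random_clause n k)"

definition mu :: "nat \<Rightarrow> nat \<Rightarrow> (nat \<Rightarrow> clause) \<Rightarrow> real" where
  "mu n m F = real (card {x \<in> cube n. \<forall>i<m. clause_val (F i) x}) / 2 ^ n"

end

theory Submission
  imports Defs
begin


lemma measure_bind_pmf_int:
  "measure_pmf.prob (bind_pmf M f) A = measure_pmf.expectation M (\<lambda>x. measure_pmf.prob (f x) A)"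
proof -
  have int: "integrable (measure_pmf M) (\<lambda>x. measure_pmf.prob (f x) A)"
    by (intro measure_pmf.integrable_const_bound[where B=1]) auto
  have "ennreal (measure_pmf.prob (bind_pmf M f) A) = emeasure (measure_pmf (bind_pmf M f)) A"
    by (simp add: measure_pmf.emeasure_eq_measure)
  also have "\<dots> = (\<integral>\<^sup>+x. emeasure (measure_pmf (f x)) A \<partial>M)" by simp
  also have "\<dots> = (\<integral>\<^sup>+x. ennreal (measure_pmf.prob (f x) A) \<partial>M)"
    by (simp add: measure_pmf.emeasure_eq_measure)
  also have "\<dots> = ennreal (measure_pmf.expectation M (\<lambda>x. measure_pmf.prob (f x) A))"
    by (intro nn_integral_eq_integral int) auto
  finally show ?thesis
    by (simp add: integral_nonneg_AE)
qed

lemma choose_Suc_id: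
  assumes "k \<le> a"
  shows "real (a choose Suc k) * Suc k = real (a choose k) * (real a - k)"
proof -
  have "Suc k * (a choose Suc k) = (a - k) * (a choose k)" using assms
    by (metis binomial_absorb_comp binomial_absorption mult.commute)
  then have "real (Suc k * (a choose Suc k)) = real ((a - k) * (a choose k))" by simp
  then show ?thesis using assms by (simp add: of_nat_diff algebra_simps)
qed

lemma choose_ratio_le:
  assumes "a \<le> n"
  shows "real (a choose k) * real n ^ k \<le> real (n choose k) * real a ^ k"
proof (induction k)
  case 0 then show ?case by simp
next
  case (Suc k)
  show ?case
  proof (cases "Suc k \<le> a")
    case False then show ?thesis by (simp add: binomial_eq_0)
  next
    case True
    have kn: "k \<le> n" using True assms by simp
    have "real (a choose Suc k) * real n ^ Suc k * Suc k
        = (real (a choose Suc k) * Suc k) * (real n ^ k * n)"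
      by (simp only: power_Suc mult_ac)
    also have "\<dots> = (real (a choose k) * real n ^ k) * ((real a - k) * n)"
      using True by (subst choose_Suc_id[of k a]) (simp_all add: ac_simps)
    also have "\<dots> \<le> (real (n choose k) * real a ^ k) * ((real a - k) * n)"
      using Suc True by (intro mult_right_mono) auto
    also have "\<dots> \<le> (real (n choose k) * real a ^ k) * ((real n - k) * a)"
      proof (intro mult_left_mono)
      have "real a * k \<le> real n * k" using assms by (intro mult_right_mono) auto
      then show "(real a - k) * n \<le> (real n - k) * a" by (simp add: algebra_simps)
    qed auto
    also have "\<dots> = (real (n choose Suc k) * Suc k) * (real a ^ k * a)"
      using kn by (subst choose_Suc_id[of k n]) (simp_all add: ac_simps)
    also have "\<dots> = real (n choose Suc k) * real a ^ Suc k * Suc k"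
      by (simp only: power_Suc mult_ac)
    finally show ?thesis by (simp only: mult_le_cancel_right)
  qed
qed




definition agree :: "nat \<Rightarrow> (nat \<Rightarrow> bool) \<Rightarrow> (nat \<Rightarrow> bool) \<Rightarrow> nat set" where
  "agree n x y = {j\<in>{..<n}. x j = y j}"

lemma per_K:
  assumes fin: "finite K" and ck: "card K = k"
  shows "measure_pmf.prob (pmf_of_set (K \<rightarrow>\<^sub>E (UNIV :: bool set)))
           {g. clause_val (K, g) x \<and> clause_val (K, g) y}
         = (2 ^ k - (if \<forall>j\<in>K. x j = y j then 1 else 2)) / 2 ^ k"
proof -
  define G where "G = K \<rightarrow>\<^sub>E (UNIV :: bool set)"
  define gx where "gx = restrict (\<lambda>j. \<not> x j) K"
  define gy where "gy = restrict (\<lambda>j. \<not> y j) K"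
  have finG: "finite G" unfolding G_def using fin by (simp add: finite_PiE)
  have neG: "G \<noteq> {}" unfolding G_def by (simp add: PiE_eq_empty_iff)
  have cardG: "card G = 2 ^ k" unfolding G_def using fin ck by (simp add: card_PiE)
  have sub: "{gx, gy} \<subseteq> G" unfolding G_def gx_def gy_def by auto
  have key: "G \<inter> {g. clause_val (K, g) x \<and> clause_val (K, g) y} = G - {gx, gy}"
  proof (intro set_eqI iffI)
    fix g assume "g \<in> G \<inter> {g. clause_val (K, g) x \<and> clause_val (K, g) y}"
    then show "g \<in> G - {gx, gy}" unfolding gx_def gy_def clause_val_def by auto
  next
    fix g assume g: "g \<in> G - {gx, gy}"
    then have gG: "g \<in> G" and ngx: "g \<noteq> gx" and ngy: "g \<noteq> gy" by auto
    have "\<exists>j\<in>K. x j = g j"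
    proof (rule ccontr)
      assume "\<not> ?thesis"
      then have "g = gx" using gG unfolding G_def gx_def
        by (intro ext) (auto simp: PiE_def extensional_def restrict_def)
      then show False using ngx by simp
    qed
    moreover have "\<exists>j\<in>K. y j = g j"
    proof (rule ccontr)
      assume "\<not> ?thesis"
      then have "g = gy" using gG unfolding G_def gy_def
        by (intro ext) (auto simp: PiE_def extensional_def restrict_def)
      then show False using ngy by simp
    qed
    ultimately show "g \<in> G \<inter> {g. clause_val (K, g) x \<and> clause_val (K, g) y}"
      using gG by (simp add: clause_val_def)
  qed
  have eqv: "gx = gy \<longleftrightarrow> (\<forall>j\<in>K. x j = y j)"
    unfolding gx_def gy_def by (auto simp: restrict_def fun_eq_iff)
  have c2: "card {gx, gy} = (if \<forall>j\<in>K. x j = y j then 1 else 2)"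
    using eqv by auto
  have "measure_pmf.prob (pmf_of_set G) {g. clause_val (K, g) x \<and> clause_val (K, g) y}
        = real (card (G - {gx, gy})) / card G"
    using finG neG key by (simp add: measure_pmf_of_set)
  also have "card (G - {gx, gy}) = card G - card {gx, gy}"
    using sub finG by (simp add: card_Diff_subset)
  also have "real (card G - card {gx, gy}) = real (card G) - card {gx, gy}"
    using sub finG card_mono by (intro of_nat_diff) blast
  finally show ?thesis unfolding G_def[symmetric] using cardG c2
    by (simp split: if_splits)
qed

lemma clause_pair:
  assumes kn: "k \<le> n"
  shows "measure_pmf.prob (random_clause n k) {C. clause_val C x \<and> clause_val C y}
         = 1 - 2 / 2 ^ k + real (card (agree n x y) choose k) / real (n choose k) / 2 ^ k"
proof -
  define KS where "KS = {K. K \<subseteq> {..<n} \<and> card K = k}"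
  define A where "A = agree n x y"
  have finKS: "finite KS" unfolding KS_def by (rule finite_subset[of _ "Pow {..<n}"]) auto
  have cardKS: "card KS = n choose k" unfolding KS_def using n_subsets[of "{..<n}" k] by simp
  have neKS: "KS \<noteq> {}" using cardKS kn finKS by (metis card.empty binomial_eq_0_iff not_less)
  have finA: "finite A" "A \<subseteq> {..<n}" unfolding A_def agree_def by auto
  have cardA: "card {K \<in> KS. K \<subseteq> A} = card A choose k"
  proof -
    have "{K \<in> KS. K \<subseteq> A} = {K. K \<subseteq> A \<and> card K = k}" unfolding KS_def using finA by auto
    then show ?thesis using n_subsets[OF finA(1)] by simp
  qed
  have agK: "(\<forall>j\<in>K. x j = y j) \<longleftrightarrow> K \<subseteq> A" if "K \<in> KS" for K
    using that unfolding KS_def A_def agree_def by auto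
  have "measure_pmf.prob (random_clause n k) {C. clause_val C x \<and> clause_val C y}
     = measure_pmf.expectation (pmf_of_set KS) (\<lambda>K. measure_pmf.prob (pmf_of_set (K \<rightarrow>\<^sub>E (UNIV :: bool set)))
           {g. clause_val (K, g) x \<and> clause_val (K, g) y})"
    unfolding random_clause_def KS_def[symmetric] measure_bind_pmf_int by (simp add: vimage_def)
  also have "\<dots> = (\<Sum>K\<in>KS. (2 ^ k - (if K \<subseteq> A then 1 else 2)) / 2 ^ k) / card KS"
    using finKS neKS
    apply (simp add: integral_pmf_of_set)
    apply (intro sum.cong refl)
    apply (subst per_K)
    using finA agK unfolding KS_def by (auto intro: finite_subset)
  also have "(\<Sum>K\<in>KS. (2 ^ k - (if K \<subseteq> A then 1 else 2)) / 2 ^ k :: real)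
      = (\<Sum>K\<in>KS. (1 - 2 / 2 ^ k) + (if K \<subseteq> A then 1 else 0) / 2 ^ k)"
    by (intro sum.cong refl) (auto simp: field_simps)
  also have "\<dots> = card KS * (1 - 2 / 2 ^ k) + card {K \<in> KS. K \<subseteq> A} / 2 ^ k"
    using finKS by (simp add: sum.distrib sum_divide_distrib[symmetric] sum.If_cases Int_def conj_commute)
  finally have "measure_pmf.prob (random_clause n k) {C. clause_val C x \<and> clause_val C y}
      = (real (n choose k) * (1 - 2 / 2 ^ k) + real (card A choose k) / 2 ^ k) / real (n choose k)"
    using cardKS cardA by simp
  moreover have "real (n choose k) > 0" using kn by simp
  ultimately show ?thesis unfolding A_def by (simp add: add_divide_distrib divide_divide_eq_left mult.commute)
qed




lemma formula_prob:
  "measure_pmf.prob (random_formula n k m) {F. \<forall>i<m. F i \<in> E} = (measure_pmf.prob (random_clause n k) E) ^ m"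
proof -
  have "{F. \<forall>i<m. F i \<in> E} = Pi {..<m} (\<lambda>_. E)" by (auto simp: Pi_def)
  then show ?thesis unfolding random_formula_def by (simp add: measure_Pi_pmf_Pi)
qed

lemma E_ind: "measure_pmf.expectation M (\<lambda>F. of_bool (P F) :: real) = measure_pmf.prob M {F. P F}"
proof -
  have "(\<lambda>F. of_bool (P F) :: real) = indicator {F. P F}" by (auto simp: indicator_def)
  then show ?thesis by simp
qed

lemma finite_cube: "finite (cube n)" unfolding cube_def by (simp add: finite_PiE)
lemma card_cube: "card (cube n) = 2 ^ n" unfolding cube_def by (simp add: card_PiE)

lemma mu_sum: "mu n m F = (\<Sum>x\<in>cube n. of_bool (\<forall>i<m. clause_val (F i) x)) / 2 ^ n"
  unfolding mu_def using finite_cube by (simp add: Int_def conj_commute)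

lemma int_bool: "integrable (measure_pmf M) (\<lambda>F. of_bool (P F) :: real)"
  by (intro measure_pmf.integrable_const_bound[where B=1]) auto

lemma agree_self: "agree n x x = {..<n}" unfolding agree_def by auto

lemma clause_single:
  assumes kn: "k \<le> n"
  shows "measure_pmf.prob (random_clause n k) {C. clause_val C x} = 1 - 1 / 2 ^ k"
  using clause_pair[OF kn, of x x] kn by (simp add: agree_self field_simps)

lemma E1:
  assumes kn: "k \<le> n"
  shows "measure_pmf.expectation (random_formula n k m) (mu n m) = (1 - 1 / 2 ^ k) ^ m"
proof -
  have "measure_pmf.expectation (random_formula n k m) (mu n m)
      = (\<Sum>x\<in>cube n. measure_pmf.expectation (random_formula n k m) (\<lambda>F. of_bool (\<forall>i<m. clause_val (F i) x))) / 2 ^ n"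
    unfolding mu_sum by (simp add: int_bool)
  also have "\<dots> = (\<Sum>x\<in>cube n. (1 - 1 / 2 ^ k) ^ m) / 2 ^ n"
  proof -
    have "measure_pmf.expectation (random_formula n k m) (\<lambda>F. of_bool (\<forall>i<m. clause_val (F i) x)) = (1 - 1 / 2 ^ k :: real) ^ m" for x
      using formula_prob[of n k m "{C. clause_val C x}"] clause_single[OF kn, of x] by (simp add: E_ind)
    then show ?thesis by simp
  qed
  finally show ?thesis by (simp add: card_cube)
qed

lemma E2:
  assumes kn: "k \<le> n"
  shows "measure_pmf.expectation (random_formula n k m) (\<lambda>F. (mu n m F)\<^sup>2)
       = (\<Sum>x\<in>cube n. \<Sum>y\<in>cube n. (1 - 2 / 2 ^ k + real (card (agree n x y) choose k) / real (n choose k) / 2 ^ k) ^ m) / (2 ^ n)\<^sup>2"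
proof -
  have sq: "(mu n m F)\<^sup>2 = (\<Sum>x\<in>cube n. \<Sum>y\<in>cube n. of_bool ((\<forall>i<m. clause_val (F i) x) \<and> (\<forall>i<m. clause_val (F i) y))) / (2 ^ n)\<^sup>2" for F
    unfolding mu_sum power_divide power2_eq_square by (simp add: sum_product of_bool_conj)
  have "measure_pmf.expectation (random_formula n k m) (\<lambda>F. (mu n m F)\<^sup>2)
      = (\<Sum>x\<in>cube n. \<Sum>y\<in>cube n. measure_pmf.expectation (random_formula n k m) (\<lambda>F. of_bool ((\<forall>i<m. clause_val (F i) x) \<and> (\<forall>i<m. clause_val (F i) y)))) / (2 ^ n)\<^sup>2"
    unfolding sq by (simp add: int_bool integrable_sum)
  also have "\<dots> = (\<Sum>x\<in>cube n. \<Sum>y\<in>cube n. (1 - 2 / 2 ^ k + real (card (agree n x y) choose k) / real (n choose k) / 2 ^ k) ^ m) / (2 ^ n)\<^sup>2"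
  proof -
    have "measure_pmf.expectation (random_formula n k m) (\<lambda>F. of_bool ((\<forall>i<m. clause_val (F i) x) \<and> (\<forall>i<m. clause_val (F i) y)))
       = (1 - 2 / 2 ^ k + real (card (agree n x y) choose k) / real (n choose k) / 2 ^ k) ^ m" for x y
    proof -
      have "{F. (\<forall>i<m. clause_val (F i) x) \<and> (\<forall>i<m. clause_val (F i) y)} = {F. \<forall>i<m. F i \<in> {C. clause_val C x \<and> clause_val C y}}" by auto
      then show ?thesis using formula_prob[of n k m "{C. clause_val C x \<and> clause_val C y}"] clause_pair[OF kn, of x y]
        by (simp add: E_ind)
    qed
    then show ?thesis by simp
  qed
  finally show ?thesis .
qed




lemma tail_card:
  assumes x: "x \<in> cube n"
  shows "card {y\<in>cube n. P (card (agree n x y))} = card {B. B \<subseteq> {..<n} \<and> P (card B)}"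
proof (rule bij_betw_same_card)
  define h where "h = (\<lambda>B j. if j < n then (if j \<in> B then x j else \<not> x j) else undefined)"
  show "bij_betw (agree n x) {y\<in>cube n. P (card (agree n x y))} {B. B \<subseteq> {..<n} \<and> P (card B)}"
  proof (rule bij_betw_byWitness[where f' = h])
    show "\<forall>y\<in>{y\<in>cube n. P (card (agree n x y))}. h (agree n x y) = y"
      unfolding h_def agree_def cube_def by (auto simp: fun_eq_iff PiE_def extensional_def)
    show "\<forall>B\<in>{B. B \<subseteq> {..<n} \<and> P (card B)}. agree n x (h B) = B"
      unfolding h_def agree_def by auto
    show "agree n x ` {y\<in>cube n. P (card (agree n x y))} \<subseteq> {B. B \<subseteq> {..<n} \<and> P (card B)}"
      unfolding agree_def by auto
    have "agree n x (h B) = B" if "B \<subseteq> {..<n}" for B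
      using that unfolding h_def agree_def by auto
    moreover have "h B \<in> cube n" for B unfolding h_def cube_def by auto
    ultimately show "h ` {B. B \<subseteq> {..<n} \<and> P (card B)} \<subseteq> {y\<in>cube n. P (card (agree n x y))}"
      by auto
  qed
qed

lemma subsets_card:
  "card {B. B \<subseteq> {..<n} \<and> P (card B)} = (\<Sum>a\<in>{a. a \<le> n \<and> P a}. n choose a)"
proof -
  have "{B. B \<subseteq> {..<n} \<and> P (card B)} = (\<Union>a\<in>{a. a \<le> n \<and> P a}. {B. B \<subseteq> {..<n} \<and> card B = a})"
    by (auto intro: card_mono[of "{..<n}", simplified])
  also have "card \<dots> = (\<Sum>a\<in>{a. a \<le> n \<and> P a}. card {B. B \<subseteq> {..<n} \<and> card B = a})"
    by (intro card_UN_disjoint) (auto intro: finite_subset[of _ "Pow {..<n}"])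
  also have "\<dots> = (\<Sum>a\<in>{a. a \<le> n \<and> P a}. n choose a)"
    using n_subsets[of "{..<n}"] by simp
  finally show ?thesis .
qed

lemma binom_half:
  "measure_pmf.prob (binomial_pmf n (1/2)) {a. P a} = (\<Sum>a\<in>{a. a \<le> n \<and> P a}. real (n choose a)) / 2 ^ n"
proof -
  have "measure_pmf.prob (binomial_pmf n (1/2)) {a. P a}
      = measure_pmf.prob (binomial_pmf n (1/2)) ({a. P a} \<inter> set_pmf (binomial_pmf n (1/2)))"
    by (rule measure_Int_set_pmf[symmetric])
  also have "{a. P a} \<inter> set_pmf (binomial_pmf n (1/2)) = {a. a \<le> n \<and> P a}" by auto
  also have "measure_pmf.prob (binomial_pmf n (1/2)) {a. a \<le> n \<and> P a}
      = (\<Sum>a\<in>{a. a \<le> n \<and> P a}. real (n choose a) * (1/2) ^ a * (1/2) ^ (n - a))"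
    by (subst measure_measure_pmf_finite) auto
  also have "\<dots> = (\<Sum>a\<in>{a. a \<le> n \<and> P a}. real (n choose a) / 2 ^ n)"
  proof (intro sum.cong refl)
    fix a assume "a \<in> {a. a \<le> n \<and> P a}"
    then have "(1/2::real) ^ a * (1/2) ^ (n - a) = (1/2) ^ n" by (simp add: power_add[symmetric])
    then show "real (n choose a) * (1/2) ^ a * (1/2) ^ (n - a) = real (n choose a) / 2 ^ n"
      by (simp add: power_divide mult.assoc)
  qed
  finally show ?thesis by (simp add: sum_divide_distrib)
qed

lemma tail_bound:
  assumes x: "x \<in> cube n" and n: "n > 0" and xi: "\<xi> \<ge> 0"
  shows "real (card {y\<in>cube n. real (card (agree n x y)) / n \<ge> 1/2 + \<xi>}) \<le> 2 ^ n * exp (-2 * real n * \<xi>\<^sup>2)"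
proof -
  interpret binomial_distribution n "1/2" by unfold_locales auto
  have "real (card {y\<in>cube n. real (card (agree n x y)) / n \<ge> 1/2 + \<xi>})
      = (\<Sum>a\<in>{a. a \<le> n \<and> real a / n \<ge> 1/2 + \<xi>}. real (n choose a))"
    using tail_card[OF x, of "\<lambda>a. real a / n \<ge> 1/2 + \<xi>"] subsets_card[of n "\<lambda>a. real a / n \<ge> 1/2 + \<xi>"]
    by simp
  also have "\<dots> = 2 ^ n * measure_pmf.prob (binomial_pmf n (1/2)) {a. real a / n \<ge> 1/2 + \<xi>}"
    by (simp add: binom_half)
  also have "\<dots> \<le> 2 ^ n * exp (-2 * real n * \<xi>\<^sup>2)"
    using prob_ge'[OF n xi] by simp
  finally show ?thesis .
qed




lemma term_bound:
  assumes k1: "k \<ge> 1" and kn: "k \<le> n" and an: "a \<le> n" and xi: "\<xi> \<ge> 0"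
  shows "(1 - 2 / 2 ^ k + real (a choose k) / real (n choose k) / 2 ^ k) ^ m
     \<le> ((1 - 1 / 2 ^ k)\<^sup>2 + ((1 + 2 * \<xi>) / 4) ^ k) ^ m
        + (1 - 1 / 2 ^ k) ^ m * of_bool (real a / n \<ge> 1/2 + \<xi>)"
proof -
  define r where "r = real (a choose k) / real (n choose k)"
  have n0: "n > 0" using k1 kn by simp
  have Cpos: "real (n choose k) > 0" using kn by simp
  have r0: "r \<ge> 0" unfolding r_def by simp
  have rle: "r \<le> (real a / n) ^ k"
  proof -
    have "r * real n ^ k \<le> real a ^ k"
      using choose_ratio_le[OF an, of k] Cpos unfolding r_def by (simp add: field_simps)
    then show ?thesis using n0 by (simp add: field_simps power_divide)
  qed
  have an1: "real a / n \<le> 1" using an n0 by simp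
  have r1: "r \<le> 1" using rle an1 power_le_one[of "real a / n" k] by simp
  have two: "(2::real) ^ k \<ge> 2" using k1 by (metis power_one_right power_increasing one_le_numeral)
  have base0: "0 \<le> 1 - 2 / 2 ^ k + r / 2 ^ k" using two r0 by (simp add: field_simps)
  show ?thesis
  proof (cases "real a / n \<ge> 1/2 + \<xi>")
    case True
    have "1 - 2 / 2 ^ k + r / 2 ^ k \<le> 1 - 1 / 2 ^ k" using r1 by (simp add: field_simps)
    then have "(1 - 2 / 2 ^ k + r / 2 ^ k) ^ m \<le> (1 - 1 / 2 ^ k) ^ m"
      using base0 by (intro power_mono) auto
    moreover have "0 \<le> ((1 - 1 / 2 ^ k)\<^sup>2 + ((1 + 2 * \<xi>) / 4) ^ k) ^ m" using xi by simp
    ultimately show ?thesis using True unfolding r_def by simp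
  next
    case False
    have "r \<le> ((1 + 2 * \<xi>) / 2) ^ k"
    proof -
      have "real a / n \<le> (1 + 2 * \<xi>) / 2" using False by (simp add: add_divide_distrib)
      then have "(real a / n) ^ k \<le> ((1 + 2 * \<xi>) / 2) ^ k" by (intro power_mono) auto
      then show ?thesis using rle by simp
    qed
    then have "r / 2 ^ k \<le> ((1 + 2 * \<xi>) / 2) ^ k / 2 ^ k" by (simp add: divide_right_mono)
    also have "\<dots> = ((1 + 2 * \<xi>) / 4) ^ k" by (simp add: power_divide power_mult_distrib[symmetric])
    finally have rb: "r / 2 ^ k \<le> ((1 + 2 * \<xi>) / 4) ^ k" .
    have "1 - 2 / 2 ^ k \<le> (1 - 1 / (2::real) ^ k)\<^sup>2" by (simp add: power2_diff field_simps power2_eq_square)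
    then have "1 - 2 / 2 ^ k + r / 2 ^ k \<le> (1 - 1 / 2 ^ k)\<^sup>2 + ((1 + 2 * \<xi>) / 4) ^ k"
      using rb by linarith
    then have "(1 - 2 / 2 ^ k + r / 2 ^ k) ^ m \<le> ((1 - 1 / 2 ^ k)\<^sup>2 + ((1 + 2 * \<xi>) / 4) ^ k) ^ m"
      using base0 by (intro power_mono) auto
    then show ?thesis using False unfolding r_def by simp
  qed
qed

lemma E2_bound:
  assumes k1: "k \<ge> 1" and kn: "k \<le> n" and xi: "\<xi> \<ge> 0"
  shows "(\<Sum>x\<in>cube n. \<Sum>y\<in>cube n. (1 - 2 / 2 ^ k + real (card (agree n x y) choose k) / real (n choose k) / 2 ^ k) ^ m) / (2 ^ n)\<^sup>2
     \<le> ((1 - 1 / 2 ^ k)\<^sup>2 + ((1 + 2 * \<xi>) / 4) ^ k) ^ m + (1 - 1 / 2 ^ k) ^ m * exp (-2 * real n * \<xi>\<^sup>2)"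
proof -
  define B where "B = ((1 - 1 / 2 ^ k)\<^sup>2 + ((1 + 2 * \<xi>) / 4) ^ k :: real) ^ m"
  define q where "q = (1 - 1 / 2 ^ k :: real) ^ m"
  define E where "E = exp (-2 * real n * \<xi>\<^sup>2)"
  have n0: "n > 0" using k1 kn by simp
  have q0: "q \<ge> 0" unfolding q_def using k1 by (simp add: field_simps one_le_power)
  have an: "card (agree n x y) \<le> n" for x y unfolding agree_def
    by (metis (no_types, lifting) card_lessThan card_mono finite_lessThan mem_Collect_eq subsetI lessThan_iff)
  have inner: "(\<Sum>y\<in>cube n. (1 - 2 / 2 ^ k + real (card (agree n x y) choose k) / real (n choose k) / 2 ^ k) ^ m)
      \<le> 2 ^ n * B + q * (2 ^ n * E)" if x: "x \<in> cube n" for x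
  proof -
    have "(\<Sum>y\<in>cube n. (1 - 2 / 2 ^ k + real (card (agree n x y) choose k) / real (n choose k) / 2 ^ k) ^ m)
        \<le> (\<Sum>y\<in>cube n. B + q * of_bool (real (card (agree n x y)) / n \<ge> 1/2 + \<xi>))"
      unfolding B_def q_def by (intro sum_mono term_bound[OF k1 kn an xi])
    also have "\<dots> = 2 ^ n * B + q * real (card {y\<in>cube n. real (card (agree n x y)) / n \<ge> 1/2 + \<xi>})"
      using finite_cube[of n] by (simp add: sum.distrib card_cube sum_distrib_left[symmetric] Int_def conj_commute)
    also have "\<dots> \<le> 2 ^ n * B + q * (2 ^ n * E)"
      unfolding E_def using tail_bound[OF x n0 xi] q0 by (intro add_left_mono mult_left_mono) auto
    finally show ?thesis .
  qed
  have "(\<Sum>x\<in>cube n. \<Sum>y\<in>cube n. (1 - 2 / 2 ^ k + real (card (agree n x y) choose k) / real (n choose k) / 2 ^ k) ^ m)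
      \<le> (\<Sum>x\<in>cube n. 2 ^ n * B + q * (2 ^ n * E))"
    by (intro sum_mono inner)
  also have "\<dots> = (2 ^ n)\<^sup>2 * (B + q * E)" by (simp add: card_cube power2_eq_square algebra_simps)
  finally show ?thesis unfolding B_def[symmetric] q_def[symmetric] E_def[symmetric]
    by (simp add: divide_le_eq mult.commute)
qed




lemma mu_bounds: "0 \<le> mu n m F" "mu n m F \<le> 1"
proof -
  have "card {x \<in> cube n. \<forall>i<m. clause_val (F i) x} \<le> card (cube n)"
    using finite_cube by (intro card_mono) auto
  then show "0 \<le> mu n m F" "mu n m F \<le> 1" unfolding mu_def by (simp_all add: card_cube)
qed

lemma prob_bound:
  assumes k1: "k \<ge> 1" and kn: "k \<le> n" and xi: "\<xi> \<ge> 0" and z: "\<zeta> > 0"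
  shows "measure_pmf.prob (random_formula n k m)
            {F. \<bar>mu n m F - (1 - 1 / 2 ^ k) ^ m\<bar> > \<zeta> * (1 - 1 / 2 ^ k) ^ m}
     \<le> (exp (4 * (((1 + 2 * \<xi>) / 4) ^ k * m)) - 1 + exp (- (\<xi>\<^sup>2 * real n)) / (1 - 1 / 2 ^ k) ^ m) / \<zeta>\<^sup>2"
proof -
  define M where "M = random_formula n k m"
  define p where "p = (1 - 1 / 2 ^ k :: real)"
  define q where "q = p ^ m"
  define \<epsilon> where "\<epsilon> = ((1 + 2 * \<xi>) / 4) ^ k"
  have two: "(2::real) ^ k \<ge> 2" using k1 by (metis power_one_right power_increasing one_le_numeral)
  have p2: "p \<ge> 1/2" unfolding p_def using two by (simp add: field_simps)
  have pp: "p\<^sup>2 \<ge> 1/4" using power_mono[OF p2, of 2] by (simp add: power2_eq_square)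
  have qpos: "q > 0" unfolding q_def using p2 by simp
  have e0: "\<epsilon> \<ge> 0" unfolding \<epsilon>_def using xi by simp
  have int1: "integrable (measure_pmf M) (mu n m)"
    by (intro measure_pmf.integrable_const_bound[where B=1]) (auto simp: mu_bounds abs_le_iff intro: order.trans[OF _ mu_bounds(2)] order.trans[OF mu_bounds(1)])
  have int2: "integrable (measure_pmf M) (\<lambda>F. (mu n m F)\<^sup>2)"
    by (intro measure_pmf.integrable_const_bound[where B=1]) (auto simp: mu_bounds abs_le_iff power_le_one)
  have Emu: "measure_pmf.expectation M (mu n m) = q" unfolding M_def q_def p_def using E1[OF kn] .
  have Emu2: "measure_pmf.expectation M (\<lambda>F. (mu n m F)\<^sup>2) \<le> (p\<^sup>2 + \<epsilon>) ^ m + q * exp (-2 * real n * \<xi>\<^sup>2)"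
    unfolding M_def E2[OF kn] p_def q_def \<epsilon>_def using E2_bound[OF k1 kn xi] .
  have var: "measure_pmf.variance M (mu n m) \<le> (p\<^sup>2 + \<epsilon>) ^ m + q * exp (-2 * real n * \<xi>\<^sup>2) - q\<^sup>2"
    using measure_pmf.variance_eq[OF int1 int2] Emu Emu2 by simp
  have aq: "\<zeta> * q > 0" using z qpos by simp
  have "measure_pmf.prob M {F. \<bar>mu n m F - q\<bar> > \<zeta> * q}
      \<le> measure_pmf.prob M {F \<in> space (measure_pmf M). \<bar>mu n m F - measure_pmf.expectation M (mu n m)\<bar> \<ge> \<zeta> * q}"
    using Emu by (intro measure_pmf.finite_measure_mono) auto
  also have "\<dots> \<le> measure_pmf.variance M (mu n m) / (\<zeta> * q)\<^sup>2"
    by (intro measure_pmf.Chebyshev_inequality int2 aq) auto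
  also have "\<dots> \<le> ((p\<^sup>2 + \<epsilon>) ^ m + q * exp (-2 * real n * \<xi>\<^sup>2) - q\<^sup>2) / (\<zeta> * q)\<^sup>2"
    using var by (intro divide_right_mono) auto
  also have "\<dots> = ((p\<^sup>2 + \<epsilon>) ^ m / q\<^sup>2 - 1 + exp (-2 * real n * \<xi>\<^sup>2) / q) / \<zeta>\<^sup>2"
    using qpos z by (simp add: field_simps power2_eq_square)
  also have "\<dots> \<le> (exp (4 * (\<epsilon> * m)) - 1 + exp (- (\<xi>\<^sup>2 * real n)) / q) / \<zeta>\<^sup>2"
  proof -
    have "(p\<^sup>2 + \<epsilon>) ^ m / q\<^sup>2 = (1 + \<epsilon> / p\<^sup>2) ^ m"
      unfolding q_def using p2 by (simp add: power_divide[symmetric] field_simps power_mult[symmetric] power_mult_distrib)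
    also have "\<dots> \<le> (1 + 4 * \<epsilon>) ^ m"
    proof (intro power_mono)
      have "\<epsilon> / p\<^sup>2 \<le> \<epsilon> / (1/4)" using pp e0 by (intro divide_left_mono) auto
      then show "1 + \<epsilon> / p\<^sup>2 \<le> 1 + 4 * \<epsilon>" by simp
      show "0 \<le> 1 + \<epsilon> / p\<^sup>2" using e0 by simp
    qed
    also have "\<dots> \<le> exp (4 * \<epsilon>) ^ m"
      using e0 by (intro power_mono) (auto simp: exp_ge_add_one_self)
    also have "\<dots> = exp (4 * (\<epsilon> * m))" by (simp add: exp_of_nat_mult[symmetric] ac_simps)
    finally have 1: "(p\<^sup>2 + \<epsilon>) ^ m / q\<^sup>2 \<le> exp (4 * (\<epsilon> * m))" .
    have "exp (-2 * real n * \<xi>\<^sup>2) \<le> exp (- (\<xi>\<^sup>2 * real n))"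
      by simp
    then have 2: "exp (-2 * real n * \<xi>\<^sup>2) / q \<le> exp (- (\<xi>\<^sup>2 * real n)) / q"
      using qpos by (intro divide_right_mono) auto
    show ?thesis using 1 2 z by (intro divide_right_mono) auto
  qed
  finally show ?thesis unfolding M_def q_def p_def \<epsilon>_def .
qed



theorem lemma3p2:
  fixes k m :: "nat \<Rightarrow> nat" and \<xi> :: "nat \<Rightarrow> real" and \<zeta> :: real
  assumes k_pos: "\<forall>n. k n > 0"
    and m_pos: "\<forall>n. m n > 0"
    and xi_range: "\<forall>n. 0 < \<xi> n \<and> \<xi> n < 1/2"
    and k_le_n: "eventually (\<lambda>n. k n \<le> n) sequentially"
    and cond1: "(\<lambda>n. exp (- ((\<xi> n)^2 * real n))) \<in> o(\<lambda>n. (1 - 1 / 2 ^ k n) ^ m n)"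
    and cond2: "(\<lambda>n. ((1 + 2 * \<xi> n) / 4) ^ k n) \<in> o(\<lambda>n. 1 / real (m n))"
    and zeta_pos: "\<zeta> > 0"
  shows "(\<lambda>n. measure_pmf.prob (random_formula n (k n) (m n))
            {F. \<bar>mu n (m n) F - (1 - 1 / 2 ^ k n) ^ m n\<bar> > \<zeta> * (1 - 1 / 2 ^ k n) ^ m n})
         \<longlonglongrightarrow> 0"
proof (rule tendsto_sandwich[where f = "\<lambda>_. 0"])
  define U where "U = (\<lambda>n. (exp (4 * (((1 + 2 * \<xi> n) / 4) ^ k n * m n)) - 1
      + exp (- ((\<xi> n)\<^sup>2 * real n)) / (1 - 1 / 2 ^ k n) ^ m n) / \<zeta>\<^sup>2)"
  show "\<forall>\<^sub>F n in sequentially. 0 \<le> measure_pmf.prob (random_formula n (k n) (m n))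
            {F. \<bar>mu n (m n) F - (1 - 1 / 2 ^ k n) ^ m n\<bar> > \<zeta> * (1 - 1 / 2 ^ k n) ^ m n}"
    by simp
  show "\<forall>\<^sub>F n in sequentially. measure_pmf.prob (random_formula n (k n) (m n))
            {F. \<bar>mu n (m n) F - (1 - 1 / 2 ^ k n) ^ m n\<bar> > \<zeta> * (1 - 1 / 2 ^ k n) ^ m n} \<le> U n"
    using k_le_n
  proof eventually_elim
    case (elim n)
    show ?case unfolding U_def
      using prob_bound[of "k n" n "\<xi> n" \<zeta> "m n"] elim k_pos xi_range zeta_pos
      by (simp add: Suc_le_eq less_imp_le)
  qed
  show "(\<lambda>_. 0::real) \<longlonglongrightarrow> 0" by simp
  have l1: "(\<lambda>n. ((1 + 2 * \<xi> n) / 4) ^ k n * m n) \<longlonglongrightarrow> 0"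
  proof -
    have "(\<lambda>n. ((1 + 2 * \<xi> n) / 4) ^ k n / (1 / real (m n))) \<longlonglongrightarrow> 0"
      by (rule smalloD_tendsto[OF cond2])
    then show ?thesis by simp
  qed
  have l2: "(\<lambda>n. exp (- ((\<xi> n)\<^sup>2 * real n)) / (1 - 1 / 2 ^ k n) ^ m n) \<longlonglongrightarrow> 0"
    by (rule smalloD_tendsto[OF cond1])
  have "U \<longlonglongrightarrow> (exp (4 * 0) - 1 + 0) / \<zeta>\<^sup>2"
    unfolding U_def using zeta_pos by (intro tendsto_intros l1 l2) auto
  then show "U \<longlonglongrightarrow> 0" by simp
qed

end
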